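(* Let $n\ge2$, $\phi\in\mathrm{End}(F_n)$, and let $(X,x_1)\to(R_n,* )$ be the finite based cover associated to a finite-index fully characteristic subgroup $K\le F_n$, with deck group $\Gamma=F_n/K$. If the endomorphism of $\Gamma$ induced by $\phi$ is not the identity, then the endomorphism of $H_1(X,\mathbb{Z})$ induced by $\phi$ is not the identity.
   Context: $F_n$ is the free group of rank $n\ge2$, identified with $\pi_1(R_n,* )$ where $R_n$ is the wedge of $n$ circles with wedge point $*$. A subgroup $K\le F_n$ is fully characteristic if $\phi(K)\subseteq K$ for all $\phi\in\mathrm{End}(F_n)$; then every $\phi\in\mathrm{End}(F_n)$ induces an endomorphism of $\Gamma=F_n/K$. The based cover associated to $K$ is the connected covering $p:(X,x_1)\to(R_n,* )$ with $p_*\pi_1(X,x_1)=K$, with deck group $\Gamma$. The endomorphism of $H_1(X,\mathbb{Z})\cong K^{ab}$ induced by $\phi$ is the abelianization of $\phi|_K:K\to K$. *)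

theory Defs
  imports "HOL-Algebra.Algebra"
begin

text \<open>A letter (i, True) stands for the generator x_i, (i, False) for its inverse.
  The generators are x_0, ..., x_(n-1).\<close>

type_synonym letter = "nat \<times> bool"

definition inv_letter :: "letter \<Rightarrow> letter" where
  "inv_letter a = (fst a, \<not> snd a)"

fun free_reduce :: "letter list \<Rightarrow> letter list" where
  "free_reduce [] = []"
| "free_reduce (a # w) =
     (case free_reduce w of
        [] \<Rightarrow> [a]
      | b # w' \<Rightarrow> (if b = inv_letter a then w' else a # b # w'))"

definition reduced_word :: "letter list \<Rightarrow> bool" where
  "reduced_word w \<longleftrightarrow> (\<forall>i. Suc i < length w \<longrightarrow> w ! Suc i \<noteq> inv_letter (w ! i))"

definition free_group :: "nat \<Rightarrow> letter list monoid" where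
  "free_group n =
     \<lparr> carrier = {w. reduced_word w \<and> (\<forall>a\<in>set w. fst a < n)},
       monoid.mult = (\<lambda>u v. free_reduce (u @ v)),
       monoid.one = [] \<rparr>"

definition fully_characteristic :: "('a, 'b) monoid_scheme \<Rightarrow> 'a set \<Rightarrow> bool" where
  "fully_characteristic G K \<longleftrightarrow> subgroup K G \<and> (\<forall>\<phi>\<in>hom G G. \<phi> ` K \<subseteq> K)"

definition quot_endo :: "('a, 'b) monoid_scheme \<Rightarrow> 'a set \<Rightarrow> ('a \<Rightarrow> 'a) \<Rightarrow> 'a set \<Rightarrow> 'a set" where
  "quot_endo G K \<phi> C = K #>\<^bsub>G\<^esub> \<phi> (SOME g. g \<in> C)"

definition abelianization_sub :: "('a, 'b) monoid_scheme \<Rightarrow> 'a set \<Rightarrow> 'a set monoid" where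
  "abelianization_sub G K = (G\<lparr>carrier := K\<rparr>) Mod derived (G\<lparr>carrier := K\<rparr>) K"

definition ab_endo :: "('a, 'b) monoid_scheme \<Rightarrow> 'a set \<Rightarrow> ('a \<Rightarrow> 'a) \<Rightarrow> 'a set \<Rightarrow> 'a set" where
  "ab_endo G K \<phi> C = derived (G\<lparr>carrier := K\<rparr>) K #>\<^bsub>G\<lparr>carrier := K\<rparr>\<^esub> \<phi> (SOME k. k \<in> C)"

end

theory Submission
  imports Defs
begin

definition rl :: "letter \<Rightarrow> letter list \<Rightarrow> letter list" where
  "rl a w = (case w of [] \<Rightarrow> [a] | b # w' \<Rightarrow> (if b = inv_letter a then w' else a # b # w'))"

lemma fr_cons: "free_reduce (a # w) = rl a (free_reduce w)"
  by (simp add: rl_def)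

declare free_reduce.simps(2)[simp del]
declare fr_cons[simp]

lemma inv_inv[simp]: "inv_letter (inv_letter a) = a"
  by (simp add: inv_letter_def)
lemma inv_neq[simp]: "inv_letter a \<noteq> a" "a \<noteq> inv_letter a"
  by (auto simp add: inv_letter_def prod_eq_iff)
lemma inv_fst[simp]: "fst (inv_letter a) = fst a" by (simp add: inv_letter_def)
lemma inv_snd[simp]: "snd (inv_letter a) = (\<not> snd a)" by (simp add: inv_letter_def)

lemma reduced_Nil[simp]: "reduced_word []" by (simp add: reduced_word_def)
lemma reduced_Cons: "reduced_word (a # w) \<longleftrightarrow> reduced_word w \<and> (w = [] \<or> hd w \<noteq> inv_letter a)"
  apply (cases w)
   apply (simp add: reduced_word_def)
  apply (auto simp add: reduced_word_def nth_Cons split: nat.splits)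
  done

lemma reduced_rl: "reduced_word w \<Longrightarrow> reduced_word (rl a w)"
  by (auto simp add: rl_def reduced_Cons split: list.splits)

lemma reduced_fr: "reduced_word (free_reduce w)"
  by (induction w) (auto simp add: fr_cons reduced_rl)

lemma fr_reduced: "reduced_word w \<Longrightarrow> free_reduce w = w"
  by (induction w) (auto simp add: fr_cons rl_def reduced_Cons split: list.splits)

lemma fr_fr[simp]: "free_reduce (free_reduce w) = free_reduce w"
  by (simp add: fr_reduced reduced_fr)

lemma fr_app2: "free_reduce (u @ v) = free_reduce (u @ free_reduce v)"
  by (induction u) (auto simp add: fr_cons)

lemma rl_cancel: "reduced_word x \<Longrightarrow> rl a (rl (inv_letter a) x) = x"
  by (cases x) (auto simp add: rl_def reduced_Cons split: list.splits)

lemma set_rl: "set (rl a w) \<subseteq> insert a (set w)"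
  by (auto simp add: rl_def split: list.splits)

lemma set_fr: "set (free_reduce w) \<subseteq> set w"
  apply (induction w)
   apply simp
  apply (simp add: fr_cons)
  using set_rl by blast

lemma fr_foldr: "free_reduce (u @ v) = foldr rl u (free_reduce v)"
  by (induction u) (auto simp add: fr_cons)

lemma reduced_foldr: "reduced_word z \<Longrightarrow> reduced_word (foldr rl y z)"
  by (induction y) (auto simp add: reduced_rl)

lemma rl_foldr: "reduced_word y \<Longrightarrow> reduced_word z \<Longrightarrow>
   rl a (foldr rl y z) = foldr rl (rl a y) z"
proof (cases y)
  case Nil then show ?thesis by (simp add: rl_def)
next
  case (Cons b y')
  assume ry: "reduced_word y" and rz: "reduced_word z"
  show ?thesis
  proof (cases "b = inv_letter a")
    case True
    have "rl a (foldr rl y z) = rl a (rl (inv_letter a) (foldr rl y' z))" using Cons True by simp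
    also have "\<dots> = foldr rl y' z" using rl_cancel reduced_foldr rz by blast
    finally show ?thesis using Cons True by (simp add: rl_def)
  next
    case False then show ?thesis using Cons by (simp add: rl_def)
  qed
qed

lemma foldr_red: "reduced_word z \<Longrightarrow> foldr rl u z = foldr rl (free_reduce u) z"
proof (induction u)
  case Nil then show ?case by simp
next
  case (Cons a u)
  have "foldr rl (a # u) z = rl a (foldr rl (free_reduce u) z)" using Cons by simp
  also have "\<dots> = foldr rl (rl a (free_reduce u)) z" using rl_foldr reduced_fr Cons(2) by blast
  finally show ?case by (simp only: fr_cons)
qed

lemma fr_app1: "free_reduce (u @ v) = free_reduce (free_reduce u @ v)"
  using fr_foldr[of u v] fr_foldr[of "free_reduce u" v] foldr_red[OF reduced_fr, of u v] by simp

lemma fr_assoc: "free_reduce (free_reduce (u @ v) @ w) = free_reduce (u @ free_reduce (v @ w))"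
proof -
  have "free_reduce (free_reduce (u @ v) @ w) = free_reduce ((u @ v) @ w)" by (rule fr_app1[symmetric])
  also have "\<dots> = free_reduce (u @ (v @ w))" by simp
  also have "\<dots> = free_reduce (u @ free_reduce (v @ w))" by (rule fr_app2)
  finally show ?thesis .
qed

definition inw :: "letter list \<Rightarrow> letter list" where
  "inw w = rev (map inv_letter w)"

lemma fr_inw: "free_reduce (inw w @ w) = []"
proof (induction w)
  case Nil then show ?case by (simp add: inw_def)
next
  case (Cons a w)
  have "free_reduce (inw (a # w) @ a # w) = free_reduce (inw w @ (inv_letter a # a # w))"
    by (simp add: inw_def)
  also have "\<dots> = free_reduce (inw w @ free_reduce (inv_letter a # a # w))" by (rule fr_app2)
  also have "free_reduce (inv_letter a # a # w) = free_reduce w"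
    using rl_cancel[of "free_reduce w" "inv_letter a"] by (simp add: fr_cons reduced_fr)
  finally show ?case using Cons fr_app2[of "inw w" w] by simp
qed

lemma carrier_FG: "carrier (free_group n) = {w. reduced_word w \<and> (\<forall>a\<in>set w. fst a < n)}"
  by (simp add: free_group_def)
lemma mult_FG: "x \<otimes>\<^bsub>free_group n\<^esub> y = free_reduce (x @ y)"
  by (simp add: free_group_def)
lemma one_FG: "\<one>\<^bsub>free_group n\<^esub> = []"
  by (simp add: free_group_def)

lemma group_FG: "group (free_group n)"
proof (rule groupI)
  fix x y assume "x \<in> carrier (free_group n)" "y \<in> carrier (free_group n)"
  then show "x \<otimes>\<^bsub>free_group n\<^esub> y \<in> carrier (free_group n)"
    using set_fr[of "x@y"] by (auto simp add: carrier_FG mult_FG reduced_fr)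
next
  show "\<one>\<^bsub>free_group n\<^esub> \<in> carrier (free_group n)" by (simp add: carrier_FG one_FG)
next
  fix x y z show "x \<otimes>\<^bsub>free_group n\<^esub> y \<otimes>\<^bsub>free_group n\<^esub> z = x \<otimes>\<^bsub>free_group n\<^esub> (y \<otimes>\<^bsub>free_group n\<^esub> z)"
    by (simp add: mult_FG fr_assoc)
next
  fix x assume "x \<in> carrier (free_group n)"
  then show "\<one>\<^bsub>free_group n\<^esub> \<otimes>\<^bsub>free_group n\<^esub> x = x"
    by (simp add: carrier_FG mult_FG one_FG fr_reduced)
next
  fix x assume x: "x \<in> carrier (free_group n)"
  show "\<exists>y\<in>carrier (free_group n). y \<otimes>\<^bsub>free_group n\<^esub> x = \<one>\<^bsub>free_group n\<^esub>"
  proof (intro bexI)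
    show "free_reduce (inw x) \<otimes>\<^bsub>free_group n\<^esub> x = \<one>\<^bsub>free_group n\<^esub>"
      by (simp add: mult_FG one_FG fr_app1[symmetric] fr_inw)
    show "free_reduce (inw x) \<in> carrier (free_group n)"
      using x set_fr[of "inw x"] by (force simp add: carrier_FG reduced_fr inw_def)
  qed
qed

fun wcnt :: "(letter list \<Rightarrow> bool) \<Rightarrow> nat \<Rightarrow> letter list \<Rightarrow> letter list \<Rightarrow> int" where
  "wcnt P i u [] = 0"
| "wcnt P i u (a # w) = (if fst a = i then (if snd a then (if P u then 1 else 0)
      else (if P (free_reduce (u @ [a])) then -1 else 0)) else 0)
     + wcnt P i (free_reduce (u @ [a])) w"

lemma wcnt_append: "reduced_word u \<Longrightarrow>
  wcnt P i u (xs @ ys) = wcnt P i u xs + wcnt P i (free_reduce (u @ xs)) ys"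
proof (induction xs arbitrary: u)
  case Nil then show ?case by (simp add: fr_reduced)
next
  case (Cons a xs)
  have "free_reduce (free_reduce (u @ [a]) @ xs) = free_reduce (u @ a # xs)"
    by (metis append_Cons append_Nil append_assoc fr_app1)
  then show ?case using Cons.IH[of "free_reduce (u @ [a])"] by (simp add: reduced_fr)
qed

lemma fr_pair: "reduced_word u \<Longrightarrow> free_reduce (free_reduce (u @ [a]) @ [inv_letter a]) = u"
proof -
  assume u: "reduced_word u"
  have "free_reduce (free_reduce (u @ [a]) @ [inv_letter a]) = free_reduce (u @ free_reduce [a, inv_letter a])"
    by (metis append_Cons append_Nil append_assoc fr_app1 fr_app2)
  also have "free_reduce [a, inv_letter a] = []" by (simp add: rl_def)
  finally show ?thesis using u by (simp add: fr_reduced)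
qed

lemma wcnt_rl: "reduced_word z \<Longrightarrow> reduced_word u \<Longrightarrow> wcnt P i u (rl a z) = wcnt P i u (a # z)"
proof (cases z)
  case Nil then show ?thesis by (simp add: rl_def)
next
  case (Cons b z')
  assume rz: "reduced_word z" and ru: "reduced_word u"
  show ?thesis
  proof (cases "b = inv_letter a")
    case False then show ?thesis using Cons by (simp add: rl_def)
  next
    case True
    have e: "free_reduce (free_reduce (u @ [a]) @ [inv_letter a]) = u" using fr_pair ru by blast
    show ?thesis using Cons True e by (cases "snd a") (simp_all add: rl_def)
  qed
qed

lemma wcnt_fr: "reduced_word u \<Longrightarrow> wcnt P i u (free_reduce w) = wcnt P i u w"
proof (induction w arbitrary: u)
  case Nil then show ?case by simp
next
  case (Cons a w)
  have "wcnt P i u (free_reduce (a # w)) = wcnt P i u (a # free_reduce w)"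
    using wcnt_rl reduced_fr Cons.prems by simp
  also have "\<dots> = wcnt P i u (a # w)" using Cons.IH[of "free_reduce (u @ [a])"] by (simp add: reduced_fr)
  finally show ?case .
qed

lemma wcnt_shift: "wcnt P i (free_reduce (u @ u')) x = wcnt (\<lambda>v. P (free_reduce (u @ v))) i u' x"
proof (induction x arbitrary: u')
  case Nil then show ?case by simp
next
  case (Cons a x)
  have e: "free_reduce (free_reduce (u @ u') @ [a]) = free_reduce (u @ free_reduce (u' @ [a]))"
    by (metis append_assoc fr_app1 fr_app2)
  show ?case using Cons.IH[of "free_reduce (u' @ [a])"] by (simp add: e)
qed

lemma wcnt_cong: "x \<in> carrier (free_group n) \<Longrightarrow> u \<in> carrier (free_group n) \<Longrightarrow>
   (\<And>v. v \<in> carrier (free_group n) \<Longrightarrow> P v = P' v) \<Longrightarrow> wcnt P i u x = wcnt P' i u x"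
proof (induction x arbitrary: u)
  case Nil then show ?case by simp
next
  case (Cons a x)
  have x: "x \<in> carrier (free_group n)" using Cons.prems(1)
    by (simp add: carrier_FG reduced_Cons)
  have ua: "free_reduce (u @ [a]) \<in> carrier (free_group n)"
    using Cons.prems(1,2) set_fr[of "u @ [a]"] by (auto simp add: carrier_FG reduced_fr)
  show ?case using Cons.IH[OF x ua] Cons.prems(2,3) ua by simp
qed

definition pw :: "nat \<Rightarrow> nat \<Rightarrow> letter list" where
  "pw i r = replicate r (i, True)"

lemma reduced_pw: "reduced_word (pw i r)"
  by (simp add: reduced_word_def pw_def inv_letter_def)

lemma wcnt_pw: "wcnt P i [] (pw i m) = (\<Sum>r<m. if P (pw i r) then 1 else 0)"
proof (induction m)
  case 0 then show ?case by (simp add: pw_def)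
next
  case (Suc m)
  have "pw i (Suc m) = pw i m @ [(i, True)]" by (simp add: pw_def replicate_append_same)
  then have "wcnt P i [] (pw i (Suc m)) = wcnt P i [] (pw i m) + wcnt P i (pw i m) [(i,True)]"
    using wcnt_append[of "[]" P i "pw i m" "[(i,True)]"] by (simp add: fr_reduced reduced_pw)
  then show ?case using Suc by simp
qed

lemma fr_filter_cons: "free_reduce (filter Q (a # y)) = (if Q a then rl a (free_reduce (filter Q y)) else free_reduce (filter Q y))"
  by simp

lemma fr_filter_rl:
  assumes "\<And>b. Q (inv_letter b) = Q b" "reduced_word z"
  shows "free_reduce (filter Q (rl a z)) = free_reduce (filter Q (a # z))"
proof (cases z)
  case Nil then show ?thesis by (simp add: rl_def)
next
  case (Cons b z')
  show ?thesis
  proof (cases "b = inv_letter a")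
    case False then show ?thesis using Cons by (simp add: rl_def)
  next
    case True
    have "rl a (rl (inv_letter a) (free_reduce (filter Q z'))) = free_reduce (filter Q z')"
      using rl_cancel reduced_fr by blast
    then show ?thesis using Cons True assms(1)[of a] by (simp add: rl_def)
  qed
qed

lemma fr_filter_fr:
  assumes "\<And>b. Q (inv_letter b) = Q b"
  shows "free_reduce (filter Q (free_reduce w)) = free_reduce (filter Q w)"
proof (induction w)
  case Nil then show ?case by simp
next
  case (Cons a w)
  have "free_reduce (filter Q (free_reduce (a # w))) = free_reduce (filter Q (a # free_reduce w))"
    using fr_filter_rl[of Q "free_reduce w" a] assms reduced_fr by simp
  also have "\<dots> = free_reduce (filter Q (a # w))"
    using Cons by (simp only: fr_filter_cons)
  finally show ?case .
qed

definition psi :: "nat \<Rightarrow> letter list \<Rightarrow> letter list" where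
  "psi j w = free_reduce (filter (\<lambda>a. fst a \<noteq> j) w)"

lemma psi_hom: "psi j \<in> hom (free_group n) (free_group n)"
proof (rule homI)
  fix x assume "x \<in> carrier (free_group n)"
  then show "psi j x \<in> carrier (free_group n)"
    using set_fr[of "filter (\<lambda>a. fst a \<noteq> j) x"] by (auto simp add: carrier_FG psi_def reduced_fr)
next
  fix x y
  have "psi j (x \<otimes>\<^bsub>free_group n\<^esub> y) = free_reduce (filter (\<lambda>a. fst a \<noteq> j) (x @ y))"
    by (simp add: psi_def mult_FG fr_filter_fr)
  also have "\<dots> = free_reduce (psi j x @ psi j y)"
    unfolding psi_def filter_append
    using fr_app1[of "filter (\<lambda>a. fst a \<noteq> j) x" "filter (\<lambda>a. fst a \<noteq> j) y"]
      fr_app2[of "free_reduce (filter (\<lambda>a. fst a \<noteq> j) x)" "filter (\<lambda>a. fst a \<noteq> j) y"] by simp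
  finally show "psi j (x \<otimes>\<^bsub>free_group n\<^esub> y) = psi j x \<otimes>\<^bsub>free_group n\<^esub> psi j y"
    by (simp add: mult_FG)
qed

lemma psi_pw_same: "psi j (pw j r) = []"
  by (simp add: psi_def pw_def)
lemma psi_pw_other: "i \<noteq> j \<Longrightarrow> psi j (pw i r) = pw i r"
  by (simp add: psi_def pw_def fr_reduced[OF reduced_pw[unfolded pw_def]])

lemma pw_carrier: "i < n \<Longrightarrow> pw i r \<in> carrier (free_group n)"
  by (simp add: carrier_FG reduced_pw) (simp add: pw_def)

lemma pw_add: "pw i (a + b) = pw i a \<otimes>\<^bsub>free_group n\<^esub> pw i b"
proof -
  have "pw i a \<otimes>\<^bsub>free_group n\<^esub> pw i b = free_reduce (pw i (a + b))"
    by (simp add: mult_FG pw_def replicate_add)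
  then show ?thesis by (simp add: fr_reduced reduced_pw)
qed

lemma wcnt_mult:
  assumes "x \<in> carrier (free_group n)"
  shows "wcnt P i [] (x \<otimes>\<^bsub>free_group n\<^esub> y) = wcnt P i [] x + wcnt (\<lambda>v. P (x \<otimes>\<^bsub>free_group n\<^esub> v)) i [] y"
proof -
  have rx: "reduced_word x" using assms by (simp add: carrier_FG)
  have "wcnt P i [] (x \<otimes>\<^bsub>free_group n\<^esub> y) = wcnt P i [] (x @ y)"
    by (simp add: mult_FG wcnt_fr)
  also have "\<dots> = wcnt P i [] x + wcnt P i (free_reduce (x @ [])) y"
    using wcnt_append[of "[]" P i x y] rx by (simp add: fr_reduced)
  also have "wcnt P i (free_reduce (x @ [])) y = wcnt (\<lambda>v. P (free_reduce (x @ v))) i [] y"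
    by (rule wcnt_shift)
  finally show ?thesis by (simp add: mult_FG)
qed

definition LI :: "nat \<Rightarrow> letter list set \<Rightarrow> (letter list \<Rightarrow> bool) \<Rightarrow> bool" where
  "LI n K P \<longleftrightarrow> (\<forall>k\<in>K. \<forall>v\<in>carrier (free_group n). P (k \<otimes>\<^bsub>free_group n\<^esub> v) = P v)"

lemma wcnt_hom_K:
  assumes K: "subgroup K (free_group n)" and P: "LI n K P" and k: "k \<in> K" and k': "k' \<in> K"
  shows "wcnt P i [] (k \<otimes>\<^bsub>free_group n\<^esub> k') = wcnt P i [] k + wcnt P i [] k'"
proof -
  have kc: "k \<in> carrier (free_group n)" "k' \<in> carrier (free_group n)"
    using subgroup.mem_carrier[OF K k] subgroup.mem_carrier[OF K k'] by auto
  have "wcnt (\<lambda>v. P (k \<otimes>\<^bsub>free_group n\<^esub> v)) i [] k' = wcnt P i [] k'"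
    by (rule wcnt_cong[OF kc(2), of "[]"]) (use P k in \<open>auto simp: LI_def carrier_FG\<close>)
  then show ?thesis using wcnt_mult[OF kc(1)] by simp
qed

lemma kill_derived:
  assumes K: "subgroup K (free_group n)"
    and f: "\<And>x y. x \<in> K \<Longrightarrow> y \<in> K \<Longrightarrow> f (x \<otimes>\<^bsub>free_group n\<^esub> y) = f x + (f y :: int)"
    and d: "d \<in> derived ((free_group n)\<lparr>carrier := K\<rparr>) K"
  shows "d \<in> K \<and> f d = 0"
proof -
  interpret G: group "free_group n" by (rule group_FG)
  have oneK: "\<one>\<^bsub>free_group n\<^esub> \<in> K" by (rule subgroup.one_closed[OF K])
  have f1: "f \<one>\<^bsub>free_group n\<^esub> = 0"
  proof -
    have "\<one>\<^bsub>free_group n\<^esub> \<otimes>\<^bsub>free_group n\<^esub> \<one>\<^bsub>free_group n\<^esub> = \<one>\<^bsub>free_group n\<^esub>" by simp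
    then have "f \<one>\<^bsub>free_group n\<^esub> = f \<one>\<^bsub>free_group n\<^esub> + f \<one>\<^bsub>free_group n\<^esub>"
      using f[OF oneK oneK] by simp
    then show ?thesis by linarith
  qed
  have finv: "f (inv\<^bsub>free_group n\<^esub> h) = - f h" "inv\<^bsub>free_group n\<^esub> h \<in> K" if h: "h \<in> K" for h
  proof -
    show hi: "inv\<^bsub>free_group n\<^esub> h \<in> K" by (rule subgroup.m_inv_closed[OF K h])
    have "h \<otimes>\<^bsub>free_group n\<^esub> inv\<^bsub>free_group n\<^esub> h = \<one>\<^bsub>free_group n\<^esub>"
      using subgroup.mem_carrier[OF K h] by simp
    then have "f \<one>\<^bsub>free_group n\<^esub> = f h + f (inv\<^bsub>free_group n\<^esub> h)" using f[OF h hi] by simp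
    then show "f (inv\<^bsub>free_group n\<^esub> h) = - f h" using f1 by linarith
  qed
  have invc: "inv\<^bsub>(free_group n)\<lparr>carrier := K\<rparr>\<^esub> h = inv\<^bsub>free_group n\<^esub> h" if "h \<in> K" for h
    using G.m_inv_consistent[OF K that] .
  have mK: "x \<otimes>\<^bsub>free_group n\<^esub> y \<in> K" if "x \<in> K" "y \<in> K" for x y
    by (rule subgroup.m_closed[OF K that])
  have ds: "h \<in> K \<and> f h = 0" if hd: "h \<in> derived_set ((free_group n)\<lparr>carrier := K\<rparr>) K" for h
  proof -
    from hd obtain h1 where h1: "h1 \<in> K" and hd1: "h \<in> (\<Union>h2 \<in> K. { h1 \<otimes>\<^bsub>(free_group n)\<lparr>carrier := K\<rparr>\<^esub> h2 \<otimes>\<^bsub>(free_group n)\<lparr>carrier := K\<rparr>\<^esub> inv\<^bsub>(free_group n)\<lparr>carrier := K\<rparr>\<^esub> h1 \<otimes>\<^bsub>(free_group n)\<lparr>carrier := K\<rparr>\<^esub> inv\<^bsub>(free_group n)\<lparr>carrier := K\<rparr>\<^esub> h2 })"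
      by (rule UN_E)
    from hd1 obtain h2 where h2: "h2 \<in> K" and hd2: "h \<in> { h1 \<otimes>\<^bsub>(free_group n)\<lparr>carrier := K\<rparr>\<^esub> h2 \<otimes>\<^bsub>(free_group n)\<lparr>carrier := K\<rparr>\<^esub> inv\<^bsub>(free_group n)\<lparr>carrier := K\<rparr>\<^esub> h1 \<otimes>\<^bsub>(free_group n)\<lparr>carrier := K\<rparr>\<^esub> inv\<^bsub>(free_group n)\<lparr>carrier := K\<rparr>\<^esub> h2 }"
      by (rule UN_E)
    have h: "h = h1 \<otimes>\<^bsub>free_group n\<^esub> h2 \<otimes>\<^bsub>free_group n\<^esub> inv\<^bsub>free_group n\<^esub> h1 \<otimes>\<^bsub>free_group n\<^esub> inv\<^bsub>free_group n\<^esub> h2"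
      using hd2 invc[OF h1] invc[OF h2] by simp
    have i1: "inv\<^bsub>free_group n\<^esub> h1 \<in> K" "inv\<^bsub>free_group n\<^esub> h2 \<in> K"
      by (rule finv(2)[OF h1], rule finv(2)[OF h2])
    have m1: "h1 \<otimes>\<^bsub>free_group n\<^esub> h2 \<in> K" by (rule mK[OF h1 h2])
    have m2: "h1 \<otimes>\<^bsub>free_group n\<^esub> h2 \<otimes>\<^bsub>free_group n\<^esub> inv\<^bsub>free_group n\<^esub> h1 \<in> K" by (rule mK[OF m1 i1(1)])
    have "f h = f h1 + f h2 + f (inv\<^bsub>free_group n\<^esub> h1) + f (inv\<^bsub>free_group n\<^esub> h2)"
      unfolding h using f[OF m2 i1(2)] f[OF m1 i1(1)] f[OF h1 h2] by linarith
    moreover have "h \<in> K" unfolding h by (rule mK[OF m2 i1(2)])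
    ultimately show ?thesis using finv(1)[OF h1] finv(1)[OF h2] by linarith
  qed
  show ?thesis using d unfolding derived_def
  proof (induction)
    case one then show ?case using oneK f1 by simp
  next
    case (incl h) then show ?case by (rule ds)
  next
    case (inv h)
    have a: "h \<in> K" "f h = 0" using ds[OF inv] by auto
    show ?case unfolding invc[OF a(1)] using finv[OF a(1)] a(2) by simp
  next
    case (eng h1 h2)
    have a: "h1 \<in> K" "h2 \<in> K" "f h1 = 0" "f h2 = 0" using eng.IH by auto
    show ?case using f[OF a(1,2)] mK[OF a(1,2)] a(3,4) by simp
  qed
qed

lemma wcnt_conj:
  assumes N: "K \<lhd> free_group n" and P: "LI n K P" and g: "g \<in> carrier (free_group n)" and k: "k \<in> K"
  shows "wcnt P i [] (g \<otimes>\<^bsub>free_group n\<^esub> k \<otimes>\<^bsub>free_group n\<^esub> inv\<^bsub>free_group n\<^esub> g)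
       = wcnt (\<lambda>v. P (g \<otimes>\<^bsub>free_group n\<^esub> v)) i [] k"
proof -
  interpret G: group "free_group n" by (rule group_FG)
  let ?G = "free_group n"
  have kc: "k \<in> carrier ?G" by (rule subgroup.mem_carrier[OF normal_imp_subgroup[OF N] k])
  have ig: "inv\<^bsub>?G\<^esub> g \<in> carrier ?G" using g by simp
  have k1: "g \<otimes>\<^bsub>?G\<^esub> k \<otimes>\<^bsub>?G\<^esub> inv\<^bsub>?G\<^esub> g \<in> K" by (rule normal.inv_op_closed2[OF N g k])
  have e1: "wcnt P i [] (g \<otimes>\<^bsub>?G\<^esub> k \<otimes>\<^bsub>?G\<^esub> inv\<^bsub>?G\<^esub> g) = wcnt P i [] g + wcnt (\<lambda>v. P (g \<otimes>\<^bsub>?G\<^esub> v)) i [] k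
     + wcnt (\<lambda>v. P (g \<otimes>\<^bsub>?G\<^esub> (k \<otimes>\<^bsub>?G\<^esub> v))) i [] (inv\<^bsub>?G\<^esub> g)"
    using wcnt_mult[OF g, of P i "k \<otimes>\<^bsub>?G\<^esub> inv\<^bsub>?G\<^esub> g"] wcnt_mult[OF kc, of "\<lambda>v. P (g \<otimes>\<^bsub>?G\<^esub> v)" i "inv\<^bsub>?G\<^esub> g"]
    by (simp add: G.m_assoc g kc)
  have e2: "wcnt (\<lambda>v. P (g \<otimes>\<^bsub>?G\<^esub> (k \<otimes>\<^bsub>?G\<^esub> v))) i [] (inv\<^bsub>?G\<^esub> g) = wcnt (\<lambda>v. P (g \<otimes>\<^bsub>?G\<^esub> v)) i [] (inv\<^bsub>?G\<^esub> g)"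
  proof (rule wcnt_cong[OF ig])
    show "[] \<in> carrier ?G" by (simp add: carrier_FG)
    fix v assume v: "v \<in> carrier ?G"
    have "g \<otimes>\<^bsub>?G\<^esub> (k \<otimes>\<^bsub>?G\<^esub> v) = (g \<otimes>\<^bsub>?G\<^esub> k \<otimes>\<^bsub>?G\<^esub> inv\<^bsub>?G\<^esub> g) \<otimes>\<^bsub>?G\<^esub> (g \<otimes>\<^bsub>?G\<^esub> v)"
    proof -
      have "inv\<^bsub>?G\<^esub> g \<otimes>\<^bsub>?G\<^esub> (g \<otimes>\<^bsub>?G\<^esub> v) = v" using g v by (simp add: G.m_assoc[symmetric])
      then show ?thesis using g kc v by (simp add: G.m_assoc)
    qed
    moreover have "g \<otimes>\<^bsub>?G\<^esub> v \<in> carrier ?G" using g v by simp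
    ultimately show "P (g \<otimes>\<^bsub>?G\<^esub> (k \<otimes>\<^bsub>?G\<^esub> v)) = P (g \<otimes>\<^bsub>?G\<^esub> v)"
      using P k1 unfolding LI_def by metis
  qed
  have e3: "wcnt P i [] g + wcnt (\<lambda>v. P (g \<otimes>\<^bsub>?G\<^esub> v)) i [] (inv\<^bsub>?G\<^esub> g) = 0"
    using wcnt_mult[OF g, of P i "inv\<^bsub>?G\<^esub> g"] g by (simp add: one_FG)
  show ?thesis using e1 e2 e3 by simp
qed

lemma LI_shift:
  assumes N: "K \<lhd> free_group n" and P: "LI n K P" and x: "x \<in> carrier (free_group n)"
  shows "LI n K (\<lambda>v. P (x \<otimes>\<^bsub>free_group n\<^esub> v))"
  unfolding LI_def
proof (intro ballI)
  interpret G: group "free_group n" by (rule group_FG)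
  let ?G = "free_group n"
  fix k v assume k: "k \<in> K" and v: "v \<in> carrier ?G"
  have kc: "k \<in> carrier ?G" by (rule subgroup.mem_carrier[OF normal_imp_subgroup[OF N] k])
  have k1: "x \<otimes>\<^bsub>?G\<^esub> k \<otimes>\<^bsub>?G\<^esub> inv\<^bsub>?G\<^esub> x \<in> K" by (rule normal.inv_op_closed2[OF N x k])
  have c: "inv\<^bsub>?G\<^esub> x \<otimes>\<^bsub>?G\<^esub> (x \<otimes>\<^bsub>?G\<^esub> v) = v" using x v by (simp add: G.m_assoc[symmetric])
  have e: "x \<otimes>\<^bsub>?G\<^esub> (k \<otimes>\<^bsub>?G\<^esub> v) = (x \<otimes>\<^bsub>?G\<^esub> k \<otimes>\<^bsub>?G\<^esub> inv\<^bsub>?G\<^esub> x) \<otimes>\<^bsub>?G\<^esub> (x \<otimes>\<^bsub>?G\<^esub> v)"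
    using x kc v c by (simp add: G.m_assoc)
  have xv: "x \<otimes>\<^bsub>?G\<^esub> v \<in> carrier ?G" using x v by simp
  show "P (x \<otimes>\<^bsub>?G\<^esub> (k \<otimes>\<^bsub>?G\<^esub> v)) = P (x \<otimes>\<^bsub>?G\<^esub> v)"
    using P k1 xv e unfolding LI_def by metis
qed

lemma sub_mult_iff:
  assumes K: "subgroup K (free_group n)" and a: "a \<in> K" and b: "b \<in> carrier (free_group n)"
  shows "(a \<otimes>\<^bsub>free_group n\<^esub> b \<in> K) = (b \<in> K)"
proof
  interpret G: group "free_group n" by (rule group_FG)
  let ?G = "free_group n"
  have ac: "a \<in> carrier ?G" by (rule subgroup.mem_carrier[OF K a])
  assume ab: "a \<otimes>\<^bsub>?G\<^esub> b \<in> K"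
  have ia: "inv\<^bsub>?G\<^esub> a \<in> K" by (rule subgroup.m_inv_closed[OF K a])
  have "inv\<^bsub>?G\<^esub> a \<otimes>\<^bsub>?G\<^esub> (a \<otimes>\<^bsub>?G\<^esub> b) \<in> K" by (rule subgroup.m_closed[OF K ia ab])
  then show "b \<in> K" using ac b by (simp add: G.m_assoc[symmetric])
next
  assume "b \<in> K" then show "a \<otimes>\<^bsub>free_group n\<^esub> b \<in> K" by (rule subgroup.m_closed[OF K a])
qed

lemma exists_pow:
  assumes K: "subgroup K (free_group n)" and fin: "finite (rcosets\<^bsub>free_group n\<^esub> K)" and i: "i < n"
  shows "\<exists>p>0. pw i p \<in> K"
proof -
  interpret G: group "free_group n" by (rule group_FG)
  let ?G = "free_group n"
  let ?m = "card (rcosets\<^bsub>?G\<^esub> K)"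
  let ?f = "\<lambda>r. K #>\<^bsub>?G\<^esub> pw i r"
  have sub: "?f ` {..?m} \<subseteq> rcosets\<^bsub>?G\<^esub> K"
    using G.rcosetsI[OF subgroup.subset[OF K] pw_carrier[OF i]] by auto
  have "\<not> inj_on ?f {..?m}"
  proof
    assume "inj_on ?f {..?m}"
    then have "card {..?m} \<le> ?m" using card_inj_on_le[OF _ sub fin] by blast
    then show False by simp
  qed
  then obtain a b where ab: "a \<noteq> b" "?f a = ?f b" unfolding inj_on_def by blast
  have "\<exists>a b. a < b \<and> ?f a = ?f b"
    using ab by (metis linorder_neqE_nat)
  then obtain a b where ab: "a < b" "?f a = ?f b" by blast
  have "pw i b \<in> K #>\<^bsub>?G\<^esub> pw i a"
    using G.repr_independenceD[OF K pw_carrier[OF i] ab(2)] .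
  then have "pw i b \<otimes>\<^bsub>?G\<^esub> inv\<^bsub>?G\<^esub> pw i a \<in> K"
    by (rule subgroup.rcos_module_imp[OF K G.is_group pw_carrier[OF i]])
  moreover have "pw i b = pw i (b - a) \<otimes>\<^bsub>?G\<^esub> pw i a"
    using pw_add[of i "b - a" a n] ab(1) by simp
  ultimately have "pw i (b - a) \<in> K"
    using pw_carrier[OF i] by (simp add: G.m_assoc)
  then show ?thesis using ab(1) by (intro exI[of _ "b - a"]) simp
qed

theorem corollary1p3:
  fixes n :: nat and \<phi> :: "letter list \<Rightarrow> letter list" and K :: "letter list set"
  assumes "n \<ge> 2"
    and "\<phi> \<in> hom (free_group n) (free_group n)"
    and "fully_characteristic (free_group n) K"
    and "finite (rcosets\<^bsub>free_group n\<^esub> K)"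
    and "\<exists>C \<in> carrier (free_group n Mod K). quot_endo (free_group n) K \<phi> C \<noteq> C"
  shows "\<exists>C \<in> carrier (abelianization_sub (free_group n) K). ab_endo (free_group n) K \<phi> C \<noteq> C"
proof (rule ccontr)
  let ?G = "free_group n"
  interpret G: group ?G by (rule group_FG)
  have gh: "group_hom ?G ?G \<phi>"
    by (simp add: group_hom_def group_hom_axioms_def group_FG assms(2))
  interpret phi: group_hom ?G ?G \<phi> by (rule gh)
  assume contra: "\<not> (\<exists>C \<in> carrier (abelianization_sub ?G K). ab_endo ?G K \<phi> C \<noteq> C)"
  then have AB: "\<And>C. C \<in> carrier (abelianization_sub ?G K) \<Longrightarrow> ab_endo ?G K \<phi> C = C" by blast
  have K: "subgroup K ?G" using assms(3) unfolding fully_characteristic_def by (rule conjunct1)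
  have KK: "\<And>\<psi> x. \<psi> \<in> hom ?G ?G \<Longrightarrow> x \<in> K \<Longrightarrow> \<psi> x \<in> K"
    using assms(3) unfolding fully_characteristic_def by blast
  have Kc: "\<And>x. x \<in> K \<Longrightarrow> x \<in> carrier ?G" by (rule subgroup.mem_carrier[OF K])
  have cancel: "\<And>x y. x \<in> carrier ?G \<Longrightarrow> y \<in> carrier ?G \<Longrightarrow> inv\<^bsub>?G\<^esub> x \<otimes>\<^bsub>?G\<^esub> (x \<otimes>\<^bsub>?G\<^esub> y) = y"
    by (simp add: G.m_assoc[symmetric])
  have cancel2: "\<And>x y. x \<in> carrier ?G \<Longrightarrow> y \<in> carrier ?G \<Longrightarrow> x \<otimes>\<^bsub>?G\<^esub> (inv\<^bsub>?G\<^esub> x \<otimes>\<^bsub>?G\<^esub> y) = y"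
    by (simp add: G.m_assoc[symmetric])
  have conjhom: "(\<lambda>h. x \<otimes>\<^bsub>?G\<^esub> h \<otimes>\<^bsub>?G\<^esub> inv\<^bsub>?G\<^esub> x) \<in> hom ?G ?G" if x: "x \<in> carrier ?G" for x
  proof (rule homI)
    fix a assume "a \<in> carrier ?G" then show "x \<otimes>\<^bsub>?G\<^esub> a \<otimes>\<^bsub>?G\<^esub> inv\<^bsub>?G\<^esub> x \<in> carrier ?G" using x by simp
  next
    fix a b assume a: "a \<in> carrier ?G" and b: "b \<in> carrier ?G"
    show "x \<otimes>\<^bsub>?G\<^esub> (a \<otimes>\<^bsub>?G\<^esub> b) \<otimes>\<^bsub>?G\<^esub> inv\<^bsub>?G\<^esub> x =
      (x \<otimes>\<^bsub>?G\<^esub> a \<otimes>\<^bsub>?G\<^esub> inv\<^bsub>?G\<^esub> x) \<otimes>\<^bsub>?G\<^esub> (x \<otimes>\<^bsub>?G\<^esub> b \<otimes>\<^bsub>?G\<^esub> inv\<^bsub>?G\<^esub> x)"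
      using x a b by (simp add: G.m_assoc cancel)
  qed
  have N: "K \<lhd> ?G"
    unfolding G.normal_inv_iff
  proof (intro conjI ballI)
    show "subgroup K ?G" by (rule K)
    fix x h assume x: "x \<in> carrier ?G" and h: "h \<in> K"
    show "x \<otimes>\<^bsub>?G\<^esub> h \<otimes>\<^bsub>?G\<^esub> inv\<^bsub>?G\<^esub> x \<in> K"
      using KK[OF conjhom[OF x] h] by simp
  qed
  obtain C where C: "C \<in> carrier (?G Mod K)" "quot_endo ?G K \<phi> C \<noteq> C" using assms(5) by blast
  obtain c where c: "c \<in> carrier ?G" "C = K #>\<^bsub>?G\<^esub> c"
    using C(1) unfolding FactGroup_def RCOSETS_def by auto
  define g where "g = (SOME g. g \<in> C)"
  have cC: "c \<in> C" using c G.rcos_self[OF c(1) K] by simp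
  have gC: "g \<in> C" unfolding g_def using cC by (rule someI)
  have g: "g \<in> carrier ?G"
    using subgroup.elemrcos_carrier[OF K G.is_group c(1)] gC c(2) by simp
  have Cg: "C = K #>\<^bsub>?G\<^esub> g" using G.repr_independence[OF _ c(1) K, of g] gC c(2) by simp
  have qe: "K #>\<^bsub>?G\<^esub> \<phi> g \<noteq> K #>\<^bsub>?G\<^esub> g"
    using C(2) Cg unfolding quot_endo_def g_def by simp
  have phig: "\<phi> g \<in> carrier ?G" using g by simp
  define s where "s = inv\<^bsub>?G\<^esub> g \<otimes>\<^bsub>?G\<^esub> \<phi> g"
  have sc: "s \<in> carrier ?G" unfolding s_def using g by simp
  have sK: "s \<notin> K"
  proof
    assume sK: "s \<in> K"
    have "g \<otimes>\<^bsub>?G\<^esub> s \<otimes>\<^bsub>?G\<^esub> inv\<^bsub>?G\<^esub> g \<in> K" by (rule normal.inv_op_closed2[OF N g sK])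
    moreover have "g \<otimes>\<^bsub>?G\<^esub> s \<otimes>\<^bsub>?G\<^esub> inv\<^bsub>?G\<^esub> g = \<phi> g \<otimes>\<^bsub>?G\<^esub> inv\<^bsub>?G\<^esub> g"
      unfolding s_def using g by (simp add: G.m_assoc[symmetric])
    ultimately have "\<phi> g \<otimes>\<^bsub>?G\<^esub> inv\<^bsub>?G\<^esub> g \<in> K" by simp
    then have "\<phi> g \<in> K #>\<^bsub>?G\<^esub> g" by (rule subgroup.rcos_module_rev[OF K G.is_group g phig])
    then have "K #>\<^bsub>?G\<^esub> g = K #>\<^bsub>?G\<^esub> \<phi> g" by (rule G.repr_independence[OF _ g K])
    then show False using qe by simp
  qed
  have HYP: "wcnt P i [] (\<phi> k) = wcnt P i [] k" if P: "LI n K P" and k: "k \<in> K" for P i k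
  proof -
    define D where "D = derived (?G\<lparr>carrier := K\<rparr>) K"
    let ?f = "\<lambda>x. wcnt P i [] x"
    have fh: "?f (x \<otimes>\<^bsub>?G\<^esub> y) = ?f x + ?f y" if "x \<in> K" "y \<in> K" for x y
      by (rule wcnt_hom_K[OF K P that])
    have fph: "?f (\<phi> (x \<otimes>\<^bsub>?G\<^esub> y)) = ?f (\<phi> x) + ?f (\<phi> y)" if "x \<in> K" "y \<in> K" for x y
    proof -
      have "\<phi> (x \<otimes>\<^bsub>?G\<^esub> y) = \<phi> x \<otimes>\<^bsub>?G\<^esub> \<phi> y" using Kc[OF that(1)] Kc[OF that(2)] by simp
      then show ?thesis using fh[OF KK[OF assms(2) that(1)] KK[OF assms(2) that(2)]] by simp
    qed
    have kD1: "d \<in> K \<and> ?f d = 0" if "d \<in> D" for d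
      by (rule kill_derived[where f = "\<lambda>x. wcnt P i [] x", OF K fh that[unfolded D_def]])
    have kD2: "d \<in> K \<and> ?f (\<phi> d) = 0" if "d \<in> D" for d
      by (rule kill_derived[where f = "\<lambda>x. wcnt P i [] (\<phi> x)", OF K fph that[unfolded D_def]])
    have oneD: "[] \<in> D"
    proof -
      have "\<one>\<^bsub>?G\<lparr>carrier := K\<rparr>\<^esub> \<in> D" unfolding D_def derived_def by (rule generate.one)
      then show ?thesis by (simp add: one_FG)
    qed
    have rc: "\<And>x. D #>\<^bsub>?G\<lparr>carrier := K\<rparr>\<^esub> x = D #>\<^bsub>?G\<^esub> x"
      by (simp add: r_coset_def)
    define C' where "C' = D #>\<^bsub>?G\<^esub> k"
    have C'c: "C' \<in> carrier (abelianization_sub ?G K)"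
      unfolding abelianization_sub_def FactGroup_def RCOSETS_def C'_def D_def[symmetric]
      using k rc by auto
    have AB': "D #>\<^bsub>?G\<^esub> \<phi> (SOME x. x \<in> C') = C'"
      using AB[OF C'c] unfolding ab_endo_def D_def[symmetric] rc .
    have kC': "k \<in> C'" unfolding C'_def r_coset_def
    proof -
      have "[] \<otimes>\<^bsub>?G\<^esub> k = k" using G.l_one[OF Kc[OF k]] by (simp only: one_FG)
      then show "k \<in> (\<Union>h\<in>D. {h \<otimes>\<^bsub>?G\<^esub> k})" using oneD by blast
    qed
    define k' where "k' = (SOME x. x \<in> C')"
    have k'C: "k' \<in> C'" unfolding k'_def using kC' by (rule someI)
    obtain d where d: "d \<in> D" "k' = d \<otimes>\<^bsub>?G\<^esub> k" using k'C unfolding C'_def r_coset_def by blast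
    have dK: "d \<in> K" using kD1[OF d(1)] by simp
    have k'K: "k' \<in> K" using d(2) subgroup.m_closed[OF K dK k] by simp
    have "\<phi> k' \<in> D #>\<^bsub>?G\<^esub> \<phi> k'"
    proof -
      have "[] \<otimes>\<^bsub>?G\<^esub> \<phi> k' = \<phi> k'" using G.l_one[OF Kc[OF KK[OF assms(2) k'K]]] by (simp only: one_FG)
      then show ?thesis unfolding r_coset_def using oneD by blast
    qed
    then have "\<phi> k' \<in> C'" using AB' unfolding k'_def by simp
    then obtain d' where d': "d' \<in> D" "\<phi> k' = d' \<otimes>\<^bsub>?G\<^esub> k" unfolding C'_def r_coset_def by blast
    have d'K: "d' \<in> K" using kD1[OF d'(1)] by simp
    have e1: "?f (\<phi> k') = ?f k" using d'(2) fh[OF d'K k] kD1[OF d'(1)] by simp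
    have e2: "?f (\<phi> k') = ?f (\<phi> k)" using d(2) fph[OF dK k] kD2[OF d(1)] by simp
    show ?thesis using e1 e2 by simp
  qed
  have KEY: "wcnt (\<lambda>v. P (g \<otimes>\<^bsub>?G\<^esub> v)) i [] k = wcnt (\<lambda>v. P (\<phi> g \<otimes>\<^bsub>?G\<^esub> v)) i [] k"
    if P: "LI n K P" and k: "k \<in> K" for P i k
  proof -
    define k1 where "k1 = g \<otimes>\<^bsub>?G\<^esub> k \<otimes>\<^bsub>?G\<^esub> inv\<^bsub>?G\<^esub> g"
    have k1K: "k1 \<in> K" unfolding k1_def by (rule normal.inv_op_closed2[OF N g k])
    have a: "wcnt P i [] k1 = wcnt (\<lambda>v. P (g \<otimes>\<^bsub>?G\<^esub> v)) i [] k"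
      unfolding k1_def by (rule wcnt_conj[OF N P g k])
    have pk: "\<phi> k \<in> K" by (rule KK[OF assms(2) k])
    have "\<phi> k1 = \<phi> g \<otimes>\<^bsub>?G\<^esub> \<phi> k \<otimes>\<^bsub>?G\<^esub> inv\<^bsub>?G\<^esub> (\<phi> g)"
      unfolding k1_def using g Kc[OF k] by simp
    then have b: "wcnt P i [] (\<phi> k1) = wcnt (\<lambda>v. P (\<phi> g \<otimes>\<^bsub>?G\<^esub> v)) i [] (\<phi> k)"
      using wcnt_conj[OF N P phig pk] by simp
    have c: "wcnt (\<lambda>v. P (\<phi> g \<otimes>\<^bsub>?G\<^esub> v)) i [] (\<phi> k) = wcnt (\<lambda>v. P (\<phi> g \<otimes>\<^bsub>?G\<^esub> v)) i [] k"
      by (rule HYP[OF LI_shift[OF N P phig] k])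
    show ?thesis using a b c HYP[OF P k1K] by simp
  qed
  define P0 where "P0 = (\<lambda>v. inv\<^bsub>?G\<^esub> g \<otimes>\<^bsub>?G\<^esub> v \<in> K)"
  have LI0: "LI n K P0" unfolding LI_def P0_def
  proof (intro ballI)
    fix k v assume k: "k \<in> K" and v: "v \<in> carrier ?G"
    have ig: "inv\<^bsub>?G\<^esub> g \<in> carrier ?G" using g by simp
    have k1: "inv\<^bsub>?G\<^esub> g \<otimes>\<^bsub>?G\<^esub> k \<otimes>\<^bsub>?G\<^esub> inv\<^bsub>?G\<^esub> (inv\<^bsub>?G\<^esub> g) \<in> K"
      by (rule normal.inv_op_closed2[OF N ig k])
    have e: "inv\<^bsub>?G\<^esub> g \<otimes>\<^bsub>?G\<^esub> (k \<otimes>\<^bsub>?G\<^esub> v) = (inv\<^bsub>?G\<^esub> g \<otimes>\<^bsub>?G\<^esub> k \<otimes>\<^bsub>?G\<^esub> inv\<^bsub>?G\<^esub> (inv\<^bsub>?G\<^esub> g)) \<otimes>\<^bsub>?G\<^esub> (inv\<^bsub>?G\<^esub> g \<otimes>\<^bsub>?G\<^esub> v)"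
      using g Kc[OF k] v by (simp add: G.m_assoc cancel cancel2)
    show "(inv\<^bsub>?G\<^esub> g \<otimes>\<^bsub>?G\<^esub> (k \<otimes>\<^bsub>?G\<^esub> v) \<in> K) = (inv\<^bsub>?G\<^esub> g \<otimes>\<^bsub>?G\<^esub> v \<in> K)"
      unfolding e using sub_mult_iff[OF K k1] g v by simp
  qed
  have KEY2: "wcnt (\<lambda>v. v \<in> K) i [] k = wcnt (\<lambda>v. s \<otimes>\<^bsub>?G\<^esub> v \<in> K) i [] k" if k: "k \<in> K" for i k
  proof -
    have kc: "k \<in> carrier ?G" by (rule Kc[OF k])
    have nil: "[] \<in> carrier ?G" by (simp add: carrier_FG)
    have "wcnt (\<lambda>v. v \<in> K) i [] k = wcnt (\<lambda>v. P0 (g \<otimes>\<^bsub>?G\<^esub> v)) i [] k"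
      by (rule wcnt_cong[OF kc nil]) (simp add: P0_def cancel g)
    also have "\<dots> = wcnt (\<lambda>v. P0 (\<phi> g \<otimes>\<^bsub>?G\<^esub> v)) i [] k" by (rule KEY[OF LI0 k])
    also have "\<dots> = wcnt (\<lambda>v. s \<otimes>\<^bsub>?G\<^esub> v \<in> K) i [] k"
      by (rule wcnt_cong[OF kc nil]) (simp add: P0_def s_def g G.m_assoc)
    finally show ?thesis .
  qed
  have POW: "\<exists>p>0. pw i p \<in> K \<and> (\<forall>r. 0 < r \<and> r < p \<longrightarrow> pw i r \<notin> K) \<and> (\<exists>r<p. 0 < r \<and> s \<otimes>\<^bsub>?G\<^esub> pw i r \<in> K)"
    if i: "i < n" for i
  proof -
    obtain p0 where "p0 > 0" "pw i p0 \<in> K" using exists_pow[OF K assms(4) i] by blast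
    define p where "p = (LEAST p. 0 < p \<and> pw i p \<in> K)"
    have pp: "0 < p \<and> pw i p \<in> K" unfolding p_def
      by (rule LeastI[of "\<lambda>p. 0 < p \<and> pw i p \<in> K" p0]) (use \<open>p0 > 0\<close> \<open>pw i p0 \<in> K\<close> in simp)
    have pmin: "pw i r \<notin> K" if "0 < r" "r < p" for r
      using not_less_Least[of r "\<lambda>p. 0 < p \<and> pw i p \<in> K"] that unfolding p_def by simp
    have pwK: "pw i p \<in> K" using pp by simp
    have s1: "wcnt (\<lambda>v. v \<in> K) i [] (pw i p) = 1"
    proof -
      have "wcnt (\<lambda>v. v \<in> K) i [] (pw i p) = (\<Sum>r<p. if pw i r \<in> K then 1 else 0)" by (rule wcnt_pw)
      also have "\<dots> = (\<Sum>r<p. if r = 0 then 1 else 0)"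
      proof (rule sum.cong)
        fix r assume "r \<in> {..<p}"
        then show "(if pw i r \<in> K then 1 else 0) = (if r = 0 then (1::int) else 0)"
        proof (cases "r = 0")
          case True
          have "pw i r \<in> K" using True subgroup.one_closed[OF K] by (simp add: pw_def one_FG)
          then show ?thesis using True by simp
        next
          case False
          then have "pw i r \<notin> K" using pmin[of r] \<open>r \<in> {..<p}\<close> by simp
          then show ?thesis using False by simp
        qed
      qed simp
      also have "\<dots> = 1" using pp by simp
      finally show ?thesis .
    qed
    have "wcnt (\<lambda>v. s \<otimes>\<^bsub>?G\<^esub> v \<in> K) i [] (pw i p) = 1" using s1 KEY2[OF pwK] by simp
    then have "(\<Sum>r<p. if s \<otimes>\<^bsub>?G\<^esub> pw i r \<in> K then 1 else 0) \<noteq> (0::int)" by (simp add: wcnt_pw)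
    then have "\<exists>r. r < p \<and> s \<otimes>\<^bsub>?G\<^esub> pw i r \<in> K"
    proof (rule contrapos_np)
      assume "\<not> (\<exists>r. r < p \<and> s \<otimes>\<^bsub>?G\<^esub> pw i r \<in> K)"
      then have "\<forall>r\<in>{..<p}. (if s \<otimes>\<^bsub>?G\<^esub> pw i r \<in> K then 1 else 0) = (0::int)" by simp
      then show "(\<Sum>r<p. if s \<otimes>\<^bsub>?G\<^esub> pw i r \<in> K then 1 else 0) = (0::int)" by (rule sum.neutral)
    qed
    then obtain r where r: "r < p" "s \<otimes>\<^bsub>?G\<^esub> pw i r \<in> K" by blast
    have "r \<noteq> 0"
    proof
      assume "r = 0"
      then have "s \<otimes>\<^bsub>?G\<^esub> pw i r = s" using G.r_one[OF sc] by (simp add: pw_def one_FG)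
      then show False using r(2) sK by simp
    qed
    then have "\<exists>r<p. 0 < r \<and> s \<otimes>\<^bsub>?G\<^esub> pw i r \<in> K" using r by auto
    moreover have "\<forall>r. 0 < r \<and> r < p \<longrightarrow> pw i r \<notin> K" using pmin by simp
    ultimately show ?thesis using pp by (intro exI[of _ p]) simp
  qed
  have n0: "0 < n" "Suc 0 < n" using assms(1) by auto
  obtain p0 r0 where P0: "p0 > 0" "\<And>r. 0 < r \<Longrightarrow> r < p0 \<Longrightarrow> pw 0 r \<notin> K"
      "r0 < p0" "0 < r0" "s \<otimes>\<^bsub>?G\<^esub> pw 0 r0 \<in> K"
    using POW[OF n0(1)] by blast
  obtain r1 where R1: "s \<otimes>\<^bsub>?G\<^esub> pw (Suc 0) r1 \<in> K"
    using POW[OF n0(2)] by blast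
  have psih: "psi (Suc 0) \<in> hom ?G ?G" by (rule psi_hom)
  interpret psi: group_hom ?G ?G "psi (Suc 0)"
    unfolding group_hom_def group_hom_axioms_def by (intro conjI group_FG psih)
  have pc0: "pw 0 r0 \<in> carrier ?G" by (rule pw_carrier[OF n0(1)])
  have pc1: "pw (Suc 0) r1 \<in> carrier ?G" by (rule pw_carrier[OF n0(2)])
  have a1: "psi (Suc 0) (s \<otimes>\<^bsub>?G\<^esub> pw (Suc 0) r1) = psi (Suc 0) s"
  proof -
    have "psi (Suc 0) s \<in> carrier ?G" using sc by simp
    then show ?thesis using sc pc1 G.r_one[of "psi (Suc 0) s"] by (simp add: psi_pw_same one_FG)
  qed
  have a0: "psi (Suc 0) (s \<otimes>\<^bsub>?G\<^esub> pw 0 r0) = psi (Suc 0) s \<otimes>\<^bsub>?G\<^esub> pw 0 r0"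
    using sc pc0 by (simp add: psi_pw_other)
  have b1: "psi (Suc 0) s \<in> K" using KK[OF psih R1] a1 by simp
  have b0: "psi (Suc 0) s \<otimes>\<^bsub>?G\<^esub> pw 0 r0 \<in> K" using KK[OF psih P0(5)] a0 by simp
  have "pw 0 r0 \<in> K"
    using sub_mult_iff[OF K b1 pc0] b0 by simp
  then show False using P0(2)[OF P0(4) P0(3)] by simp
qed

end
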